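(* Let $K\ge1$ and $m$ be positive integers, and for $k=1,\dots,K$ let $\sigma_k^2>0$, $P_k>0$, $\lambda_k\in[0,1)$; let $\mathcal N_0>0$ and $\mathcal R>0$. Put $\Omega_k=\frac{P_k\sigma_k^2(1-\lambda_k^2)}{m\mathcal N_0}$, $w_k=\frac{\lambda_k^2}{1-\lambda_k^2}\big(1+\sum_{l=1}^K\frac{\lambda_l^2}{1-\lambda_l^2}\big)^{-1}$ and for $\boldsymbol\ell\in\mathbb N_0^K$ $$W_{\boldsymbol\ell}=\frac{\Gamma(m+\sum_k\ell_k)}{\Gamma(m)}\Big(1+\sum_{k=1}^K\frac{\lambda_k^2}{1-\lambda_k^2}\Big)^{-m}\prod_{k=1}^K\frac{w_k^{\ell_k}}{\ell_k!}.$$ Let $F_{\mathcal A_{\boldsymbol\ell}}$ be the CDF of $\prod_{k=1}^K(1+R_{\boldsymbol\ell,k})$ with $R_{\boldsymbol\ell,k}$ independent, $R_{\boldsymbol\ell,k}\sim\mathcal G(m+\ell_k,\Omega_k)$. For an integer $N\ge0$ define the truncation error $\nabla(N)=\sum_{\boldsymbol\ell\in\mathbb N_0^K:\ \sum_k\ell_k\ge N+1}W_{\boldsymbol\ell}F_{\mathcal A_{\boldsymbol\ell}}(2^{\mathcal R})$. Then $$0\le\nabla(N)\le W_{\mathbf 0}\,F^{\max}_{\mathcal A_{\boldsymbol\ell},N}(2^{\mathcal R})\,\xi(N),$$ where $F^{\max}_{\mathcal A_{\boldsymbol\ell},N}(2^{\mathcal R})=\max_{\sum_k\ell_k=N+1}F_{\mathcal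 A_{\boldsymbol\ell}}(2^{\mathcal R})$ and $$\xi(N)=\Big(\sum_{k=1}^Kw_k\Big)^{N+1}\frac{(m)_{N+1}}{(N+1)!}\,{}_2F_1\Big(m+N+1,1;N+2;\sum_{k=1}^Kw_k\Big).$$
   Context: $\mathcal G(a,b)$ is the Gamma distribution with shape $a$ and scale $b$ (density $x^{a-1}e^{-x/b}/(\Gamma(a)b^a)$). $(m)_n$ is the Pochhammer symbol and ${}_2F_1$ the Gauss hypergeometric function. *)

theory Defs
  imports "HOL-Probability.Probability"
begin

definition gamma_density :: "real \<Rightarrow> real \<Rightarrow> real \<Rightarrow> real" where
  "gamma_density a b x =
     (if 0 < x then x powr (a - 1) * exp (- x / b) / (Gamma a * b powr a) else 0)"

definition gamma_distr :: "real \<Rightarrow> real \<Rightarrow> real measure" where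
  "gamma_distr a b = density lborel (\<lambda>x. ennreal (gamma_density a b x))"

definition hyp2F1 :: "real \<Rightarrow> real \<Rightarrow> real \<Rightarrow> real \<Rightarrow> real" where
  "hyp2F1 a b c z =
     (\<Sum>n. pochhammer a n * pochhammer b n / (pochhammer c n * fact n) * z ^ n)"

text \<open>Multi-indices in N_0^K, indexed by 0..K-1 (zero outside).\<close>
definition multi_idx :: "nat \<Rightarrow> (nat \<Rightarrow> nat) set" where
  "multi_idx K = {l. \<forall>k\<ge>K. l k = 0}"

definition Omega_k :: "nat \<Rightarrow> (nat \<Rightarrow> real) \<Rightarrow> (nat \<Rightarrow> real) \<Rightarrow> (nat \<Rightarrow> real) \<Rightarrow> real \<Rightarrow> nat \<Rightarrow> real" where
  "Omega_k m P sigma2 lam N0 k = P k * sigma2 k * (1 - (lam k)\<^sup>2) / (real m * N0)"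

definition Ssum :: "nat \<Rightarrow> (nat \<Rightarrow> real) \<Rightarrow> real" where
  "Ssum K lam = 1 + (\<Sum>l<K. (lam l)\<^sup>2 / (1 - (lam l)\<^sup>2))"

definition w_k :: "nat \<Rightarrow> (nat \<Rightarrow> real) \<Rightarrow> nat \<Rightarrow> real" where
  "w_k K lam k = (lam k)\<^sup>2 / (1 - (lam k)\<^sup>2) / Ssum K lam"

definition W_l :: "nat \<Rightarrow> nat \<Rightarrow> (nat \<Rightarrow> real) \<Rightarrow> (nat \<Rightarrow> nat) \<Rightarrow> real" where
  "W_l K m lam l =
     Gamma (real m + real (\<Sum>k<K. l k)) / Gamma (real m) * Ssum K lam powr (- real m)
     * (\<Prod>k<K. w_k K lam k ^ l k / fact (l k))"

text \<open>CDF of prod_k (1 + R_k), R_k independent, R_k ~ Gamma(m + l k, Omega k):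
  realised as coordinates of the product probability space.\<close>
definition F_A :: "nat \<Rightarrow> nat \<Rightarrow> (nat \<Rightarrow> real) \<Rightarrow> (nat \<Rightarrow> nat) \<Rightarrow> real \<Rightarrow> real" where
  "F_A K m Om l x =
     measure (PiM {..<K} (\<lambda>k. gamma_distr (real m + real (l k)) (Om k)))
       {r \<in> space (PiM {..<K} (\<lambda>k. gamma_distr (real m + real (l k)) (Om k))).
          (\<Prod>k<K. 1 + r k) \<le> x}"

end

theory Submission imports Defs "HOL-Analysis.Generalised_Binomial_Theorem" begin

lemma gamma_distr_erlang:
  assumes n: "n \<ge> 1" and b: "b > 0"
  shows "gamma_distr (real n) b = density lborel (\<lambda>x. ennreal (erlang_density (n - 1) (1 / b) x))"
  unfolding gamma_distr_def
proof (rule density_cong)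
  show "(\<lambda>x. ennreal (gamma_density (real n) b x)) \<in> borel_measurable lborel"
    unfolding gamma_density_def by measurable
  show "(\<lambda>x. ennreal (erlang_density (n - 1) (1 / b) x)) \<in> borel_measurable lborel"
    by measurable
  show "AE x in lborel. ennreal (gamma_density (real n) b x) = ennreal (erlang_density (n - 1) (1 / b) x)"
    using AE_lborel_singleton[of 0]
  proof eventually_elim
    case (elim x)
    show ?case
    proof (cases "x > 0")
      case True
      have g: "Gamma (real n) = fact (n - 1)"
        using n Gamma_fact[of "n - 1"] by (simp add: of_nat_diff)
      have p1: "x powr (real n - 1) = x ^ (n - 1)"
        using True n by (simp add: powr_realpow[symmetric] of_nat_diff)
      have p2: "b powr real n = b ^ n" using b by (simp add: powr_realpow)
      have "n = Suc (n - 1)" using n by simp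
      then have p3: "(1/b) ^ Suc (n - 1) = 1 / b ^ n" by (metis power_one_over)
      have p4: "b ^ n = b * b ^ (n - 1)" using \<open>n = Suc (n - 1)\<close> by (metis power_Suc)
      show ?thesis using True b
        by (simp add: gamma_density_def erlang_density_def g p1 p2 p3 p4 field_simps)
    next
      case False
      then show ?thesis using elim by (simp add: gamma_density_def erlang_density_def)
    qed
  qed
qed

lemma gamma_props:
  assumes n: "n \<ge> 1" and b: "b > 0"
  shows "prob_space (gamma_distr (real n) b)"
    "sets (gamma_distr (real n) b) = sets borel"
    "\<And>t. emeasure (gamma_distr (real n) b) {..t} = ennreal (erlang_CDF (n - 1) (1 / b) t)"
    "emeasure (gamma_distr (real n) b) {..<0} = 0"
proof -
  have l: "0 < 1 / b" using b by simp
  note e = gamma_distr_erlang[OF n b]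
  show "prob_space (gamma_distr (real n) b)" unfolding e by (rule prob_space_erlang_density[OF l])
  show "sets (gamma_distr (real n) b) = sets borel" unfolding e by simp
  show "\<And>t. emeasure (gamma_distr (real n) b) {..t} = ennreal (erlang_CDF (n - 1) (1 / b) t)"
    unfolding e by (rule emeasure_erlang_density[OF l])
  have "emeasure (density lborel (\<lambda>x. ennreal (erlang_density (n - 1) (1 / b) x))) {..<0}
      = (\<integral>\<^sup>+ x. ennreal (erlang_density (n - 1) (1 / b) x) * indicator {..<0} x \<partial>lborel)"
    by (simp add: emeasure_density)
  also have "\<dots> = (\<integral>\<^sup>+ x. 0 \<partial>(lborel::real measure))"
    by (rule nn_integral_cong) (auto simp: erlang_density_def split: split_indicator)
  finally show "emeasure (gamma_distr (real n) b) {..<0} = 0" unfolding e by simp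
qed

lemma erlang_CDF_mono_k:
  assumes "0 < l" shows "erlang_CDF (Suc k) l t \<le> erlang_CDF k l t"
  using assms by (simp add: erlang_CDF_def)


lemma space_PiM_borel:
  fixes M :: "nat \<Rightarrow> real measure"
  assumes SM: "\<And>k. sets (M k) = sets borel"
  shows "space (PiM I M) = PiE I (\<lambda>_. UNIV)"
proof -
  have "\<And>k. space (M k) = UNIV" using sets_eq_imp_space_eq[OF SM] by simp
  then show ?thesis by (simp add: space_PiM)
qed

lemma prod_split:
  fixes M :: "nat \<Rightarrow> real measure" and c :: real
  assumes SF: "\<And>k. sigma_finite_measure (M k)" and SM: "\<And>k. sets (M k) = sets borel"
   and J: "finite J" "j \<notin> J"
  shows "emeasure (PiM (insert j J) M) {r \<in> space (PiM (insert j J) M). (\<Prod>k\<in>insert j J. 1 + r k) \<le> c}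
       = (\<integral>\<^sup>+x. emeasure (M j) {y. (1 + y) * (\<Prod>k\<in>J. 1 + x k) \<le> c} \<partial>PiM J M)"
proof -
  interpret product_sigma_finite M by (simp add: product_sigma_finite_def SF)
  define D where "D = {r \<in> space (PiM (insert j J) M). (\<Prod>k\<in>insert j J. 1 + r k) \<le> c}"
  have comp: "(\<lambda>r. r k) \<in> borel_measurable (PiM (insert j J) M)" if "k \<in> insert j J" for k
  proof -
    have "(\<lambda>r. r k) \<in> measurable (PiM (insert j J) M) (M k)"
      using that by (rule measurable_component_singleton)
    then show ?thesis using measurable_cong_sets[OF refl SM] by blast
  qed
  have meas: "(\<lambda>r. \<Prod>k\<in>insert j J. 1 + r k) \<in> borel_measurable (PiM (insert j J) M)"
    by (intro borel_measurable_prod borel_measurable_add comp) auto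
  have Dm: "D \<in> sets (PiM (insert j J) M)"
    unfolding D_def using meas by measurable
  have "emeasure (PiM (insert j J) M) D = (\<integral>\<^sup>+r. indicator D r \<partial>PiM (insert j J) M)"
    using Dm by simp
  also have "\<dots> = (\<integral>\<^sup>+x. (\<integral>\<^sup>+y. indicator D (x(j := y)) \<partial>M j) \<partial>PiM J M)"
    using J Dm by (intro product_nn_integral_insert) auto
  also have "\<dots> = (\<integral>\<^sup>+x. emeasure (M j) {y. (1 + y) * (\<Prod>k\<in>J. 1 + x k) \<le> c} \<partial>PiM J M)"
  proof (rule nn_integral_cong)
    fix x assume x: "x \<in> space (PiM J M)"
    then have xE: "x \<in> PiE J (\<lambda>_. UNIV)" using space_PiM_borel[OF SM] by simp
    have Sm: "{y. (1 + y) * (\<Prod>k\<in>J. 1 + x k) \<le> c} \<in> sets (M j)"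
      unfolding SM by measurable
    have eq: "indicator D (x(j := y)) = indicator {y. (1 + y) * (\<Prod>k\<in>J. 1 + x k) \<le> c} y" for y :: real
    proof -
      have "x(j := y) \<in> space (PiM (insert j J) M)"
        using xE J by (auto simp: space_PiM_borel[OF SM] PiE_def extensional_def)
      moreover have "(\<Prod>k\<in>insert j J. 1 + (x(j := y)) k) = (1 + y) * (\<Prod>k\<in>J. 1 + x k)"
      proof -
        have "(\<Prod>k\<in>J. 1 + (x(j := y)) k) = (\<Prod>k\<in>J. 1 + x k)"
          using J by (intro prod.cong) auto
        then show ?thesis using J by simp
      qed
      ultimately show ?thesis by (simp add: D_def indicator_def)
    qed
    show "(\<integral>\<^sup>+y. indicator D (x(j := y)) \<partial>M j) = emeasure (M j) {y. (1 + y) * (\<Prod>k\<in>J. 1 + x k) \<le> c}"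
      using Sm by (simp add: eq)
  qed
  finally show ?thesis unfolding D_def .
qed


lemma prod_step:
  fixes M :: "nat \<Rightarrow> real measure" and N' :: "real measure" and c :: real
  assumes PM: "\<And>k. prob_space (M k)" and SM: "\<And>k. sets (M k) = sets borel"
   and PN: "prob_space N'" and SN: "sets N' = sets borel"
   and dom: "\<And>t. emeasure N' {..t} \<le> emeasure (M j) {..t}"
   and neg: "emeasure (M j) {..<0} = 0"
   and J: "finite J" "j \<notin> J" and c: "c > 0"
  shows "emeasure (PiM (insert j J) (M(j := N'))) {r \<in> space (PiM (insert j J) (M(j := N'))). (\<Prod>k\<in>insert j J. 1 + r k) \<le> c}
       \<le> emeasure (PiM (insert j J) M) {r \<in> space (PiM (insert j J) M). (\<Prod>k\<in>insert j J. 1 + r k) \<le> c}"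
proof -
  have SF: "\<And>k. sigma_finite_measure (M k)" using PM prob_space_imp_sigma_finite by blast
  have SF': "\<And>k. sigma_finite_measure ((M(j := N')) k)"
    using PM PN prob_space_imp_sigma_finite by auto
  have SM': "\<And>k. sets ((M(j := N')) k) = sets borel" using SM SN by auto
  have PiJ: "PiM J (M(j := N')) = PiM J M"
    using J by (intro PiM_cong) auto
  have pt: "emeasure N' {y. (1 + y) * p \<le> c} \<le> emeasure (M j) {y. (1 + y) * p \<le> c}" for p :: real
  proof (cases "p > 0")
    case True
    have "{y. (1 + y) * p \<le> c} = {..c / p - 1}"
      using True by (auto simp: field_simps)
    then show ?thesis using dom by simp
  next
    case False
    interpret Mj: prob_space "M j" using PM by blast
    interpret N: prob_space N' using PN by blast
    have sp: "space (M j) = UNIV" using sets_eq_imp_space_eq[OF SM[of j]] by simp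
    have "emeasure (M j) {..<0} + emeasure (M j) {0..} = emeasure (M j) ({..<0} \<union> {0..})"
      by (intro plus_emeasure) (auto simp: SM)
    also have "{..<0} \<union> {0..} = space (M j)" using sp by auto
    finally have one: "emeasure (M j) {0..} = 1" using neg Mj.emeasure_space_1 by simp
    have sub: "{0..} \<subseteq> {y. (1 + y) * p \<le> c}"
    proof
      fix y :: real assume "y \<in> {0..}"
      then have "(1 + y) * p \<le> 0" using False by (intro mult_nonneg_nonpos) auto
      then show "y \<in> {y. (1 + y) * p \<le> c}" using c by simp
    qed
    have "emeasure N' {y. (1 + y) * p \<le> c} \<le> 1" by (rule N.emeasure_le_1)
    also have "1 \<le> emeasure (M j) {y. (1 + y) * p \<le> c}"
      unfolding one[symmetric] using sub by (intro emeasure_mono) (auto simp: SM)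
    finally show ?thesis .
  qed
  show ?thesis
    unfolding prod_split[OF SF SM J] prod_split[OF SF' SM' J] PiJ
    using pt by (intro nn_integral_mono) simp
qed


lemma F_A_step:
  assumes j: "j < K" and Om: "\<And>k. k < K \<Longrightarrow> Om k > 0" and x: "x > 0" and m: "m > 0"
  shows "F_A K m Om (l(j := Suc (l j))) x \<le> F_A K m Om l x"
proof -
  define G where "G l' k = (if k < K then gamma_distr (real (m + l' k)) (Om k) else return borel 0)" for l' :: "nat \<Rightarrow> nat" and k
  have PG: "prob_space (G l' k)" for l' k
    using Om m gamma_props(1)[of "m + l' k" "Om k"] by (auto simp: G_def prob_space_return)
  have SG: "sets (G l' k) = sets borel" for l' k
    using Om m gamma_props(2)[of "m + l' k" "Om k"] by (auto simp: G_def)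
  have PiG: "PiM {..<K} (\<lambda>k. gamma_distr (real m + real (l' k)) (Om k)) = PiM {..<K} (G l')" for l'
    by (intro PiM_cong) (auto simp: G_def)
  define N' where "N' = gamma_distr (real (m + Suc (l j))) (Om j)"
  have Gup: "G (l(j := Suc (l j))) = (G l)(j := N')"
    using j by (auto simp: G_def N'_def fun_eq_iff)
  define J where "J = {..<K} - {j}"
  have KJ: "{..<K} = insert j J" "j \<notin> J" "finite J" using j by (auto simp: J_def)
  have PN: "prob_space N'" and SN: "sets N' = sets borel"
    using SG[of "l(j := Suc (l j))" j] PG[of "l(j := Suc (l j))" j] Gup by auto
  have dom: "emeasure N' {..t} \<le> emeasure (G l j) {..t}" for t
  proof -
    have ge: "m + l j \<ge> 1" using m by simp
    have "emeasure N' {..t} = ennreal (erlang_CDF (m + l j) (1 / Om j) t)"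
      unfolding N'_def using gamma_props(3)[of "m + Suc (l j)" "Om j" t] Om[OF j] by simp
    also have "\<dots> \<le> ennreal (erlang_CDF (m + l j - 1) (1 / Om j) t)"
    proof -
      have "Suc (m + l j - 1) = m + l j" using ge by simp
      then show ?thesis using erlang_CDF_mono_k[of "1 / Om j" "m + l j - 1" t] Om[OF j]
        by (intro ennreal_leI) simp
    qed
    also have "\<dots> = emeasure (G l j) {..t}"
      using j gamma_props(3)[of "m + l j" "Om j" t] Om[OF j] ge by (simp add: G_def)
    finally show ?thesis .
  qed
  have neg: "emeasure (G l j) {..<0} = 0"
    using j gamma_props(4)[of "m + l j" "Om j"] Om[OF j] m by (simp add: G_def)
  have main: "emeasure (PiM {..<K} (G (l(j := Suc (l j))))) {r \<in> space (PiM {..<K} (G (l(j := Suc (l j))))). (\<Prod>k<K. 1 + r k) \<le> x}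
     \<le> emeasure (PiM {..<K} (G l)) {r \<in> space (PiM {..<K} (G l)). (\<Prod>k<K. 1 + r k) \<le> x}"
    unfolding Gup KJ(1) using prod_step[where M="G l", OF PG[of l] SG[of l] PN SN dom neg KJ(3,2) x] .
  have P1: "prob_space (PiM {..<K} (G l'))" for l'
    by (intro prob_space_PiM PG)
  have F1: "finite_measure (PiM {..<K} (G l'))" for l'
    using P1[of l'] by (simp add: prob_space_def)
  have "ennreal (measure (PiM {..<K} (G (l(j := Suc (l j))))) {r \<in> space (PiM {..<K} (G (l(j := Suc (l j))))). (\<Prod>k<K. 1 + r k) \<le> x})
     \<le> ennreal (measure (PiM {..<K} (G l)) {r \<in> space (PiM {..<K} (G l)). (\<Prod>k<K. 1 + r k) \<le> x})"
    using main unfolding finite_measure.emeasure_eq_measure[OF F1] .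
  then show ?thesis
    unfolding F_A_def PiG by (rule iffD1[OF ennreal_le_iff[OF measure_nonneg]])
qed


lemma F_A_cong:
  assumes "\<And>k. k < K \<Longrightarrow> l k = l' k"
  shows "F_A K m Om l x = F_A K m Om l' x"
proof -
  have "PiM {..<K} (\<lambda>k. gamma_distr (real m + real (l k)) (Om k)) = PiM {..<K} (\<lambda>k. gamma_distr (real m + real (l' k)) (Om k))"
    using assms by (intro PiM_cong) auto
  then show ?thesis unfolding F_A_def by simp
qed

lemma sum_upd_Suc:
  fixes l :: "nat \<Rightarrow> nat"
  assumes "j < K"
  shows "(\<Sum>k<K. (l(j := Suc (l j))) k) = Suc (\<Sum>k<K. l k)"
proof -
  have "(\<Sum>k<K. (l(j := Suc (l j))) k) = (l(j := Suc (l j))) j + (\<Sum>k\<in>{..<K} - {j}. (l(j := Suc (l j))) k)"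
    using assms by (intro sum.remove) auto
  also have "(\<Sum>k\<in>{..<K} - {j}. (l(j := Suc (l j))) k) = (\<Sum>k\<in>{..<K} - {j}. l k)"
    by (intro sum.cong) auto
  also have "(\<Sum>k<K. l k) = l j + (\<Sum>k\<in>{..<K} - {j}. l k)"
    using assms by (intro sum.remove) auto
  ultimately show ?thesis by simp
qed

lemma F_A_mono:
  assumes Om: "\<And>k. k < K \<Longrightarrow> Om k > 0" and x: "x > 0" and m: "m > 0"
  shows "(\<And>k. k < K \<Longrightarrow> l k \<le> l' k) \<Longrightarrow> F_A K m Om l' x \<le> F_A K m Om l x"
proof (induction "\<Sum>k<K. l' k - l k" arbitrary: l)
  case 0
  then have "\<And>k. k < K \<Longrightarrow> l' k = l k" by (metis le_antisym lessThan_iff sum_eq_0_iff finite_lessThan diff_is_0_eq)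
  then show ?case using F_A_cong[of K l' l] by simp
next
  case (Suc d)
  have "\<exists>j<K. l j < l' j"
  proof (rule ccontr)
    assume "\<not> ?thesis"
    then have "\<And>k. k < K \<Longrightarrow> l' k - l k = 0" by auto
    then have "(\<Sum>k<K. l' k - l k) = 0" by simp
    then show False using Suc.hyps(2) by simp
  qed
  then obtain j where j: "j < K" "l j < l' j" by blast
  define l2 where "l2 = l(j := Suc (l j))"
  have le2: "\<And>k. k < K \<Longrightarrow> l2 k \<le> l' k" using Suc.prems j by (auto simp: l2_def)
  have "(\<Sum>k<K. l' k - l2 k) + 1 = (\<Sum>k<K. l' k - l k)"
  proof -
    have "(\<Sum>k<K. l' k - l2 k) + (\<Sum>k<K. l2 k) = (\<Sum>k<K. l' k)"
      using le2 by (simp flip: sum.distrib)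
    moreover have "(\<Sum>k<K. l' k - l k) + (\<Sum>k<K. l k) = (\<Sum>k<K. l' k)"
      using Suc.prems by (simp flip: sum.distrib)
    moreover have "(\<Sum>k<K. l2 k) = Suc (\<Sum>k<K. l k)" unfolding l2_def by (rule sum_upd_Suc[OF j(1)])
    ultimately show ?thesis by simp
  qed
  then have "d = (\<Sum>k<K. l' k - l2 k)" using Suc.hyps(2) by simp
  then have "F_A K m Om l' x \<le> F_A K m Om l2 x" using Suc.hyps(1) le2 by blast
  also have "\<dots> \<le> F_A K m Om l x" unfolding l2_def by (rule F_A_step[OF j(1) Om x m])
  finally show ?case .
qed

lemma reduce_idx:
  fixes l :: "nat \<Rightarrow> nat"
  assumes "l \<in> multi_idx K" "(\<Sum>k<K. l k) \<ge> n"
  shows "\<exists>l0 \<in> multi_idx K. (\<Sum>k<K. l0 k) = n \<and> (\<forall>k<K. l0 k \<le> l k)"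
  using assms(2)
proof (induction n)
  case 0
  show ?case by (rule bexI[of _ "\<lambda>_. 0"]) (auto simp: multi_idx_def)
next
  case (Suc n)
  then obtain l0 where l0: "l0 \<in> multi_idx K" "(\<Sum>k<K. l0 k) = n" "\<forall>k<K. l0 k \<le> l k" by auto
  have "\<exists>j<K. l0 j < l j"
  proof (rule ccontr)
    assume "\<not> ?thesis"
    then have "\<forall>k<K. l0 k = l k" using l0(3) by force
    then have "(\<Sum>k<K. l0 k) = (\<Sum>k<K. l k)" by simp
    then show False using l0(2) Suc.prems by simp
  qed
  then obtain j where j: "j < K" "l0 j < l j" by blast
  show ?case
  proof (rule bexI[of _ "l0(j := Suc (l0 j))"])
    show "l0(j := Suc (l0 j)) \<in> multi_idx K" using l0(1) j by (auto simp: multi_idx_def)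
    show "(\<Sum>k<K. (l0(j := Suc (l0 j))) k) = Suc n \<and> (\<forall>k<K. (l0(j := Suc (l0 j))) k \<le> l k)"
      using sum_upd_Suc[OF j(1), of l0] l0 j by auto
  qed
qed


definition idx :: "nat \<Rightarrow> nat \<Rightarrow> (nat \<Rightarrow> nat) set" where
  "idx K n = {l \<in> multi_idx K. (\<Sum>k<K. l k) = n}"

lemma finite_idx: "finite (idx K n)"
proof -
  have "idx K n \<subseteq> (\<lambda>f k. if k < K then f k else 0) ` ({..<K} \<rightarrow>\<^sub>E {..n})"
  proof
    fix l assume l: "l \<in> idx K n"
    have "l = (\<lambda>k. if k < K then restrict l {..<K} k else 0)"
      using l by (auto simp: idx_def multi_idx_def fun_eq_iff)
    moreover have "restrict l {..<K} \<in> {..<K} \<rightarrow>\<^sub>E {..n}"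
    proof -
      have "l k \<le> n" if "k < K" for k
        using l that member_le_sum[of k "{..<K}" l] by (auto simp: idx_def)
      then show ?thesis by auto
    qed
    ultimately show "l \<in> (\<lambda>f k. if k < K then f k else 0) ` ({..<K} \<rightarrow>\<^sub>E {..n})" by blast
  qed
  moreover have "finite ({..<K} \<rightarrow>\<^sub>E {..n})" by (intro finite_PiE) auto
  ultimately show ?thesis by (meson finite_imageI finite_subset)
qed

lemma idx_Suc:
  "idx (Suc K) n = (\<Union>i\<in>{..n}. (\<lambda>l. l(K := i)) ` idx K (n - i))"
proof (intro equalityI subsetI)
  fix l assume l: "l \<in> idx (Suc K) n"
  define l' where "l' = l(K := 0)"
  have "(\<Sum>k<K. l' k) = (\<Sum>k<K. l k)" unfolding l'_def by (intro sum.cong) auto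
  then have "l' \<in> idx K (n - l K)" using l by (auto simp: idx_def multi_idx_def l'_def)
  moreover have "l = l'(K := l K)" by (simp add: l'_def)
  moreover have "l K \<le> n" using l by (auto simp: idx_def)
  ultimately show "l \<in> (\<Union>i\<in>{..n}. (\<lambda>l. l(K := i)) ` idx K (n - i))" by blast
next
  fix l assume "l \<in> (\<Union>i\<in>{..n}. (\<lambda>l. l(K := i)) ` idx K (n - i))"
  then obtain i l' where i: "i \<le> n" and l': "l' \<in> idx K (n - i)" and l: "l = l'(K := i)" by auto
  have "(\<Sum>k<K. l k) = (\<Sum>k<K. l' k)" unfolding l by (intro sum.cong) auto
  then show "l \<in> idx (Suc K) n" using i l' l by (auto simp: idx_def multi_idx_def)
qed

lemma multinomial:
  fixes w :: "nat \<Rightarrow> real"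
  shows "(\<Sum>l\<in>idx K n. \<Prod>k<K. w k ^ l k / fact (l k)) = (\<Sum>k<K. w k) ^ n / fact n"
proof (induction K arbitrary: n)
  case 0
  have "idx 0 n = (if n = 0 then {\<lambda>_. 0} else {})"
    by (auto simp: idx_def multi_idx_def fun_eq_iff)
  then show ?case by simp
next
  case (Suc K)
  define g where "g l = (\<Prod>k<Suc K. w k ^ l k / fact (l k))" for l :: "nat \<Rightarrow> nat"
  have disj: "\<forall>i\<in>{..n}. \<forall>j\<in>{..n}. i \<noteq> j \<longrightarrow> (\<lambda>l. l(K := i)) ` idx K (n - i) \<inter> (\<lambda>l. l(K := j)) ` idx K (n - j) = {}"
    by (auto simp: fun_eq_iff) (metis fun_upd_same)
  have inj: "inj_on (\<lambda>l. l(K := i)) (idx K (n - i))" for i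
  proof (rule inj_onI)
    fix a b assume a: "a \<in> idx K (n - i)" and b: "b \<in> idx K (n - i)" and e: "a(K := i) = b(K := i)"
    have "a K = 0" "b K = 0" using a b by (auto simp: idx_def multi_idx_def)
    then show "a = b" using e by (auto simp: fun_eq_iff) (metis fun_upd_apply)
  qed
  have "(\<Sum>l\<in>idx (Suc K) n. g l) = (\<Sum>i\<le>n. \<Sum>l\<in>(\<lambda>l. l(K := i)) ` idx K (n - i). g l)"
    unfolding idx_Suc using disj by (intro sum.UNION_disjoint) (auto intro: finite_idx)
  also have "\<dots> = (\<Sum>i\<le>n. \<Sum>l\<in>idx K (n - i). g (l(K := i)))"
    using inj by (intro sum.cong refl sum.reindex[unfolded comp_def]) 
  also have "\<dots> = (\<Sum>i\<le>n. w K ^ i / fact i * (\<Sum>l\<in>idx K (n - i). \<Prod>k<K. w k ^ l k / fact (l k)))"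
  proof (intro sum.cong refl)
    fix i
    show "(\<Sum>l\<in>idx K (n - i). g (l(K := i))) = w K ^ i / fact i * (\<Sum>l\<in>idx K (n - i). \<Prod>k<K. w k ^ l k / fact (l k))"
      unfolding sum_distrib_left
    proof (intro sum.cong refl)
      fix l
      have "(\<Prod>k<K. w k ^ (l(K := i)) k / fact ((l(K := i)) k)) = (\<Prod>k<K. w k ^ l k / fact (l k))"
        by (intro prod.cong) auto
      then show "g (l(K := i)) = w K ^ i / fact i * (\<Prod>k<K. w k ^ l k / fact (l k))"
        by (simp add: g_def)
    qed
  qed
  also have "\<dots> = (\<Sum>i\<le>n. w K ^ i / fact i * ((\<Sum>k<K. w k) ^ (n - i) / fact (n - i)))"
    using Suc.IH by simp
  also have "\<dots> = (\<Sum>i\<le>n. of_nat (n choose i) * w K ^ i * (\<Sum>k<K. w k) ^ (n - i)) / fact n"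
    unfolding sum_divide_distrib
    by (intro sum.cong refl) (simp add: binomial_fact field_simps)
  also have "\<dots> = (w K + (\<Sum>k<K. w k)) ^ n / fact n"
    by (simp add: binomial_ring)
  finally show ?case by (simp add: g_def add.commute)
qed


lemma summable_u:
  fixes z :: real
  assumes "0 \<le> z" "z < 1"
  shows "summable (\<lambda>n. pochhammer (real m) n * z ^ n / fact n)"
proof -
  have "(\<lambda>n. ((- real m) gchoose n) * (- z) ^ n) sums (1 + - z) powr (- real m)"
    using assms by (intro gen_binomial_real) simp
  moreover have "((- real m) gchoose n) * (- z) ^ n = pochhammer (real m) n * z ^ n / fact n" for n
  proof -
    have "((- real m) gchoose n) * (- z) ^ n = ((-1) ^ n * (-1) ^ n) * pochhammer (real m) n * z ^ n / fact n"
      by (simp add: gbinomial_pochhammer power_minus[of z] field_simps)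
    also have "(-1::real) ^ n * (-1) ^ n = 1" by (simp flip: power_add)
    finally show ?thesis by simp
  qed
  ultimately show ?thesis by (simp add: sums_iff)
qed

lemma tail_bound:
  fixes z :: real
  assumes z: "0 \<le> z" "z < 1" and m: "m > 0"
  shows "(\<Sum>n\<in>{N+1..M}. pochhammer (real m) n * z ^ n / fact n)
     \<le> z ^ (N + 1) * pochhammer (real m) (N + 1) / fact (N + 1) * hyp2F1 (real m + real N + 1) 1 (real N + 2) z"
proof -
  define u where "u n = pochhammer (real m) n * z ^ n / fact n" for n
  define t where "t j = pochhammer (real m + real N + 1) j * pochhammer 1 j / (pochhammer (real N + 2) j * fact j) * z ^ j" for j
  define C where "C = z ^ (N + 1) * pochhammer (real m) (N + 1) / fact (N + 1)"
  have su: "summable u" unfolding u_def by (rule summable_u[OF z])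
  have u0: "u n \<ge> 0" for n using z m unfolding u_def by (intro divide_nonneg_pos mult_nonneg_nonneg pochhammer_nonneg) auto
  have Ct: "u (j + (N + 1)) = C * t j" for j
  proof -
    have p1: "pochhammer (real m) (N + 1 + j) = pochhammer (real m) (N + 1) * pochhammer (real m + real N + 1) j"
      using pochhammer_product'[of "real m" "N + 1" j] by (simp add: add_ac)
    have p2: "fact (N + 1 + j) = (fact (N + 1) * pochhammer (real N + 2) j :: real)"
      using pochhammer_product'[of "1::real" "N + 1" j] by (simp add: pochhammer_fact[symmetric] add_ac)
    have p3: "pochhammer (1::real) j = fact j" by (simp add: pochhammer_fact)
    have pos: "pochhammer (real N + 2) j > 0" by (intro pochhammer_pos) simp
    have "u (j + (N + 1)) = u (N + 1 + j)" by (simp add: add.commute)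
    also have "\<dots> = pochhammer (real m) (N + 1 + j) * z ^ (N + 1 + j) / fact (N + 1 + j)"
      by (simp only: u_def)
    also have "\<dots> = C * t j"
      unfolding p1 p2 p3 C_def t_def power_add using pos by (simp add: field_simps)
    finally show ?thesis .
  qed
  have ss: "summable (\<lambda>j. u (j + (N + 1)))" using su by (rule summable_ignore_initial_segment)
  have "(\<Sum>n\<in>{N+1..M}. u n) \<le> (\<Sum>j. u (j + (N + 1)))"
  proof -
    have "(\<Sum>n\<in>{N+1..M}. u n) = (\<Sum>j<M - N. u (j + (N + 1)))"
    proof (cases "M \<ge> N + 1")
      case True
      then show ?thesis
        by (intro sum.reindex_bij_witness[of _ "\<lambda>n. n + (N + 1)" "\<lambda>n. n - (N + 1)"]) auto
    next
      case False
      then have "M - N = 0" by simp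
      then show ?thesis using False by simp
    qed
    also have "\<dots> \<le> (\<Sum>j. u (j + (N + 1)))"
      using ss u0 by (intro sum_le_suminf) auto
    finally show ?thesis .
  qed
  also have "(\<Sum>j. u (j + (N + 1))) = C * (\<Sum>j. t j)"
  proof (cases "C = 0")
    case True
    then show ?thesis unfolding Ct by simp
  next
    case False
    have "summable (\<lambda>j. u (j + (N + 1)) / C)" using ss by (rule summable_divide)
    then have "summable t" using False unfolding Ct by simp
    then show ?thesis unfolding Ct by (rule suminf_mult)
  qed
  finally show ?thesis unfolding u_def C_def t_def hyp2F1_def by simp
qed


theorem mainTheorem6:
  fixes K m N :: nat
    and sigma2 P lam :: "nat \<Rightarrow> real"
    and N0 R :: real
  assumes "K \<ge> 1" and "m > 0"
    and "\<And>k. k < K \<Longrightarrow> sigma2 k > 0"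
    and "\<And>k. k < K \<Longrightarrow> P k > 0"
    and "\<And>k. k < K \<Longrightarrow> 0 \<le> lam k \<and> lam k < 1"
    and "N0 > 0" and "R > 0"
  shows
    "let Om = Omega_k m P sigma2 lam N0;
         f = (\<lambda>l. W_l K m lam l * F_A K m Om l (2 powr R));
         A = {l \<in> multi_idx K. (\<Sum>k<K. l k) \<ge> N + 1};
         Fmax = Max ((\<lambda>l. F_A K m Om l (2 powr R)) ` {l \<in> multi_idx K. (\<Sum>k<K. l k) = N + 1});
         sw = (\<Sum>k<K. w_k K lam k);
         xi = sw ^ (N + 1) * pochhammer (real m) (N + 1) / fact (N + 1)
              * hyp2F1 (real m + real N + 1) 1 (real N + 2) sw
     in f summable_on A \<and> 0 \<le> infsum f A \<and>
        infsum f A \<le> W_l K m lam (\<lambda>_. 0) * Fmax * xi"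
proof -
  note K = assms(1) and m = assms(2) and sig = assms(3) and Pp = assms(4) and lam = assms(5)
    and N0 = assms(6)
  define Om where "Om = Omega_k m P sigma2 lam N0"
  define c where "c = (2::real) powr R"
  define f where "f = (\<lambda>l. W_l K m lam l * F_A K m Om l c)"
  define A where "A = {l \<in> multi_idx K. (\<Sum>k<K. l k) \<ge> N + 1}"
  define Fmax where "Fmax = Max ((\<lambda>l. F_A K m Om l c) ` {l \<in> multi_idx K. (\<Sum>k<K. l k) = N + 1})"
  define sw where "sw = (\<Sum>k<K. w_k K lam k)"
  define xi where "xi = sw ^ (N + 1) * pochhammer (real m) (N + 1) / fact (N + 1)
              * hyp2F1 (real m + real N + 1) 1 (real N + 2) sw"
  define S where "S = Ssum K lam"
  define T where "T = (\<Sum>l<K. (lam l)\<^sup>2 / (1 - (lam l)\<^sup>2))"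
  have lam2: "k < K \<Longrightarrow> (lam k)\<^sup>2 < 1" for k
    using lam[of k] by (simp add: abs_square_less_1)
  have T0: "T \<ge> 0" unfolding T_def
  proof (intro sum_nonneg divide_nonneg_nonneg)
    fix k assume "k \<in> {..<K}"
    then show "0 \<le> 1 - (lam k)\<^sup>2" using lam2[of k] by simp
  qed simp
  have S: "S = 1 + T" by (simp add: S_def T_def Ssum_def)
  have Spos: "S > 0" using S T0 by simp
  have w0: "k < K \<Longrightarrow> w_k K lam k \<ge> 0" for k
    using lam2[of k] Spos unfolding w_k_def S_def[symmetric]
    by (intro divide_nonneg_pos divide_nonneg_nonneg) auto
  have swT: "sw = T / S" unfolding sw_def T_def w_k_def S_def[symmetric]
    by (simp add: sum_divide_distrib)
  have sw0: "0 \<le> sw" and sw1: "sw < 1" using swT S T0 Spos by auto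
  have Om: "k < K \<Longrightarrow> Om k > 0" for k
    using lam2[of k] sig[of k] Pp[of k] N0 m by (simp add: Om_def Omega_k_def)
  have c: "c > 0" by (simp add: c_def)
  have notnp: "real m \<notin> \<int>\<^sub>\<le>\<^sub>0" using m nonpos_Ints_nonpos by force
  have Wf: "W_l K m lam l = pochhammer (real m) (\<Sum>k<K. l k) * S powr (- real m) * (\<Prod>k<K. w_k K lam k ^ l k / fact (l k))" for l
    unfolding W_l_def S_def pochhammer_Gamma[OF notnp] by simp
  have Wnn: "W_l K m lam l \<ge> 0" for l
    unfolding Wf using m w0 by (intro mult_nonneg_nonneg prod_nonneg pochhammer_nonneg divide_nonneg_nonneg) auto
  have W0: "W_l K m lam (\<lambda>_. 0) = S powr (- real m)" unfolding Wf by simp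
  have Fnn: "F_A K m Om l c \<ge> 0" for l unfolding F_A_def by simp
  define B where "B = {l \<in> multi_idx K. (\<Sum>k<K. l k) = N + 1}"
  have Bidx: "B = idx K (N + 1)" by (simp add: B_def idx_def)
  define l1 where "l1 = (\<lambda>k::nat. if k = 0 then N + 1 else 0)"
  have l1B: "l1 \<in> B" using K by (auto simp: B_def multi_idx_def l1_def sum.delta)
  have finB: "finite B" unfolding Bidx by (rule finite_idx)
  have Fle: "F_A K m Om l c \<le> Fmax" if lA: "l \<in> A" for l
  proof -
    obtain l0 where l0: "l0 \<in> multi_idx K" "(\<Sum>k<K. l0 k) = N + 1" "\<forall>k<K. l0 k \<le> l k"
      using reduce_idx[of l K "N + 1"] lA by (auto simp: A_def)
    have "F_A K m Om l c \<le> F_A K m Om l0 c"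
      using F_A_mono[of K Om c m l0 l, OF Om c m] l0(3) by blast
    also have "\<dots> \<le> Fmax" unfolding Fmax_def B_def[symmetric]
      using l0 finB by (intro Max_ge) (auto simp: B_def)
    finally show ?thesis .
  qed
  have Fmax0: "Fmax \<ge> 0" using Fle[of l1] Fnn[of l1] l1B by (auto simp: A_def B_def)
  have fnn: "f l \<ge> 0" for l unfolding f_def using Wnn Fnn by simp
  have finsum: "sum f F \<le> W_l K m lam (\<lambda>_. 0) * Fmax * xi" if F: "finite F" "F \<subseteq> A" for F
  proof -
    define M where "M = Max (insert (N + 1) ((\<lambda>l. \<Sum>k<K. l k) ` F))"
    have sub: "F \<subseteq> (\<Union>n\<in>{N+1..M}. idx K n)"
    proof
      fix l assume l: "l \<in> F"
      have "(\<Sum>k<K. l k) \<le> M" unfolding M_def using F l by (intro Max_ge) auto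
      then show "l \<in> (\<Union>n\<in>{N+1..M}. idx K n)" using F l by (auto simp: A_def idx_def)
    qed
    have "sum f F \<le> (\<Sum>l\<in>F. W_l K m lam l * Fmax)"
      unfolding f_def using F Fle Wnn by (intro sum_mono mult_left_mono) auto
    also have "\<dots> = Fmax * (\<Sum>l\<in>F. W_l K m lam l)" by (simp add: sum_distrib_left mult.commute)
    also have "(\<Sum>l\<in>F. W_l K m lam l) \<le> (\<Sum>l\<in>(\<Union>n\<in>{N+1..M}. idx K n). W_l K m lam l)"
      using sub Wnn by (intro sum_mono2) (auto intro: finite_idx)
    also have "\<dots> = (\<Sum>n\<in>{N+1..M}. \<Sum>l\<in>idx K n. W_l K m lam l)"
      by (intro sum.UNION_disjoint) (auto intro: finite_idx[unfolded idx_def] simp: idx_def)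
    also have "\<dots> = (\<Sum>n\<in>{N+1..M}. S powr (- real m) * (pochhammer (real m) n * sw ^ n / fact n))"
    proof (intro sum.cong refl)
      fix n
      have "(\<Sum>l\<in>idx K n. W_l K m lam l) = (\<Sum>l\<in>idx K n. pochhammer (real m) n * S powr (- real m) * (\<Prod>k<K. w_k K lam k ^ l k / fact (l k)))"
        unfolding Wf by (intro sum.cong refl) (simp add: idx_def)
      also have "\<dots> = pochhammer (real m) n * S powr (- real m) * (\<Sum>l\<in>idx K n. \<Prod>k<K. w_k K lam k ^ l k / fact (l k))"
        by (simp add: sum_distrib_left)
      also have "\<dots> = S powr (- real m) * (pochhammer (real m) n * sw ^ n / fact n)"
        unfolding multinomial sw_def by simp
      finally show "(\<Sum>l\<in>idx K n. W_l K m lam l) = S powr (- real m) * (pochhammer (real m) n * sw ^ n / fact n)" .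
    qed
    also have "\<dots> = S powr (- real m) * (\<Sum>n\<in>{N+1..M}. pochhammer (real m) n * sw ^ n / fact n)"
      by (simp add: sum_distrib_left)
    also have "\<dots> \<le> S powr (- real m) * xi"
      unfolding xi_def by (intro mult_left_mono tail_bound sw0 sw1 m) simp
    finally have "sum f F \<le> Fmax * (S powr (- real m) * xi)" using Fmax0 by (simp add: mult_left_mono)
    then show ?thesis by (simp add: W0 mult_ac)
  qed
  have summ: "f summable_on A"
    using fnn finsum by (intro nonneg_bdd_above_summable_on bdd_aboveI) auto
  have main: "f summable_on A \<and> 0 \<le> infsum f A \<and> infsum f A \<le> W_l K m lam (\<lambda>_. 0) * Fmax * xi"
    using summ fnn finsum by (auto intro: infsum_nonneg infsum_le_finite_sums)
  show ?thesis
    using main unfolding Let_def f_def A_def Fmax_def xi_def sw_def Om_def c_def .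
qed

end
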